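(* Let $N\ge 1$ be an integer, let $\gamma>0$, $\upsilon\in(0,1]$, $P_b>0$, $h>0$, $T>0$, and let $p_1>p_2>\cdots>p_N>0$ with $p_1\le 1$. Consider Problem P1: minimize $\sum_{k=1}^N \gamma p_k f_k^2$ over $(f_1,\dots,f_N)$ subject to $\sum_{k=1}^m \gamma f_k^2 \le \upsilon P_b h \sum_{k=1}^m \frac{1}{f_k}$ for $m=1,\dots,N$, $\sum_{k=1}^N \frac{1}{f_k}\le T$, and $f_k>0$ for all $k$; Problem P2: minimize $\sum_{k=1}^N \gamma p_k f_k^2$ over $(f_1,\dots,f_N,y_1,\dots,y_N)$ subject to $\sum_{k=1}^m \gamma f_k^2 \le \upsilon P_b h \sum_{k=1}^m y_k$ for $m=1,\dots,N$, $\sum_{k=1}^N y_k\le T$, and $f_k>0$, $\frac{1}{f_k}-y_k\le 0$ for all $k$. Then the solution of Problem P2 also solves Problem P1: if $(\{f_k^*\},\{y_k^*\})$ is an optimal solution of P2, then $y_k^*=1/f_k^*$ for all $k$ and $(f_1^*,\dots,f_N^* )$ is an optimal solution of P1.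
   Context: Model: $f_k$ is the CPU frequency of the $k$-th CPU cycle of a mobile device, $p_k$ is the probability that the $k$-th cycle is executed (the sequence is decreasing in $k$), $\gamma f^2$ is the energy consumed by one cycle at frequency $f$, $\upsilon P_b h$ is the harvested power, and $T$ is the deadline. P2 is obtained from P1 by substituting $y_k=1/f_k$ and relaxing $y_kf_k=1$ to $y_kf_k\ge 1$. *)

theory Defs
  imports "HOL-Analysis.Analysis"
begin

text \<open>Vectors (f_1..f_N), (y_1..y_N) are functions nat => real; only indices 1..N matter.\<close>

definition obj :: "nat \<Rightarrow> real \<Rightarrow> (nat \<Rightarrow> real) \<Rightarrow> (nat \<Rightarrow> real) \<Rightarrow> real" where
  "obj N \<gamma> p f = (\<Sum>k=1..N. \<gamma> * p k * (f k)^2)"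

definition feasible_P1 :: "nat \<Rightarrow> real \<Rightarrow> real \<Rightarrow> real \<Rightarrow> real \<Rightarrow> real \<Rightarrow> (nat \<Rightarrow> real) \<Rightarrow> bool" where
  "feasible_P1 N \<gamma> \<upsilon> Pb h T f \<longleftrightarrow>
     (\<forall>m\<in>{1..N}. (\<Sum>k=1..m. \<gamma> * (f k)^2) \<le> \<upsilon> * Pb * h * (\<Sum>k=1..m. 1 / f k)) \<and>
     (\<Sum>k=1..N. 1 / f k) \<le> T \<and>
     (\<forall>k\<in>{1..N}. f k > 0)"

definition optimal_P1 :: "nat \<Rightarrow> real \<Rightarrow> real \<Rightarrow> real \<Rightarrow> real \<Rightarrow> real \<Rightarrow> (nat \<Rightarrow> real) \<Rightarrow> (nat \<Rightarrow> real) \<Rightarrow> bool" where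
  "optimal_P1 N \<gamma> \<upsilon> Pb h T p f \<longleftrightarrow>
     feasible_P1 N \<gamma> \<upsilon> Pb h T f \<and>
     (\<forall>g. feasible_P1 N \<gamma> \<upsilon> Pb h T g \<longrightarrow> obj N \<gamma> p f \<le> obj N \<gamma> p g)"

definition feasible_P2 :: "nat \<Rightarrow> real \<Rightarrow> real \<Rightarrow> real \<Rightarrow> real \<Rightarrow> real \<Rightarrow> (nat \<Rightarrow> real) \<Rightarrow> (nat \<Rightarrow> real) \<Rightarrow> bool" where
  "feasible_P2 N \<gamma> \<upsilon> Pb h T f y \<longleftrightarrow>
     (\<forall>m\<in>{1..N}. (\<Sum>k=1..m. \<gamma> * (f k)^2) \<le> \<upsilon> * Pb * h * (\<Sum>k=1..m. y k)) \<and>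
     (\<Sum>k=1..N. y k) \<le> T \<and>
     (\<forall>k\<in>{1..N}. f k > 0 \<and> 1 / f k - y k \<le> 0)"

definition optimal_P2 :: "nat \<Rightarrow> real \<Rightarrow> real \<Rightarrow> real \<Rightarrow> real \<Rightarrow> real \<Rightarrow> (nat \<Rightarrow> real) \<Rightarrow> (nat \<Rightarrow> real) \<Rightarrow> (nat \<Rightarrow> real) \<Rightarrow> bool" where
  "optimal_P2 N \<gamma> \<upsilon> Pb h T p f y \<longleftrightarrow>
     feasible_P2 N \<gamma> \<upsilon> Pb h T f y \<and>
     (\<forall>g z. feasible_P2 N \<gamma> \<upsilon> Pb h T g z \<longrightarrow> obj N \<gamma> p f \<le> obj N \<gamma> p g)"

end

theory Submission
  imports Defs
begin

lemma ppos_aux: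
  fixes p :: "nat \<Rightarrow> real"
  assumes "\<And>k. 1 \<le> k \<Longrightarrow> k < N \<Longrightarrow> p k > p (Suc k)"
  shows "1 \<le> N - d \<Longrightarrow> p (N - d) \<ge> p N"
proof (induction d)
  case 0 then show ?case by simp
next
  case (Suc d)
  show ?case
  proof (cases "d < N")
    case True
    have e: "Suc (N - Suc d) = N - d" using True by simp
    have "p (N - Suc d) > p (Suc (N - Suc d))" using assms Suc.prems True by simp
    moreover have "1 \<le> N - d" using Suc.prems by simp
    ultimately show ?thesis using Suc.IH e by simp
  next
    case False then show ?thesis using Suc.prems by simp
  qed
qed

theorem lemma1:
  fixes N :: nat and \<gamma> \<upsilon> Pb h T :: real and p f y :: "nat \<Rightarrow> real"
  assumes "N \<ge> 1"
    and "\<gamma> > 0" and "0 < \<upsilon>" and "\<upsilon> \<le> 1" and "Pb > 0" and "h > 0" and "T > 0"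
    and "\<And>k. 1 \<le> k \<Longrightarrow> k < N \<Longrightarrow> p k > p (Suc k)"
    and "p N > 0" and "p 1 \<le> 1"
    and "optimal_P2 N \<gamma> \<upsilon> Pb h T p f y"
  shows "(\<forall>k\<in>{1..N}. y k = 1 / f k) \<and> optimal_P1 N \<gamma> \<upsilon> Pb h T p f"
proof -
  have pp: "p k > 0" if "k \<in> {1..N}" for k
  proof -
    have "p (N - (N - k)) \<ge> p N" using ppos_aux[of N p "N - k", OF assms(8)] that by auto
    then show ?thesis using that assms(9) by simp
  qed
  have fe: "feasible_P2 N \<gamma> \<upsilon> Pb h T f y" and op: "\<And>g z. feasible_P2 N \<gamma> \<upsilon> Pb h T g z \<Longrightarrow> obj N \<gamma> p f \<le> obj N \<gamma> p g"
    using assms(11) unfolding optimal_P2_def by auto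
  have E: "\<forall>m\<in>{1..N}. (\<Sum>k=1..m. \<gamma> * (f k)^2) \<le> \<upsilon> * Pb * h * (\<Sum>k=1..m. y k)"
    and S: "(\<Sum>k=1..N. y k) \<le> T" and F: "\<forall>k\<in>{1..N}. f k > 0 \<and> 1 / f k - y k \<le> 0"
    using fe unfolding feasible_P2_def by auto
  have Y: "y k = 1 / f k" if k0: "k \<in> {1..N}" for k
  proof (rule ccontr)
    assume ne: "y k \<noteq> 1 / f k"
    have fk: "f k > 0" and yk0: "1 / f k \<le> y k" using F k0 by auto
    have yk: "y k > 1 / f k" using ne yk0 by simp
    have ypos: "y k > 0" using yk fk by (meson less_trans zero_less_divide_1_iff)
    define g where "g = f(k := 1 / y k)"
    have gk: "g k < f k" using yk fk ypos unfolding g_def by (simp add: field_simps)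
    have gkpos: "g k > 0" using ypos unfolding g_def by simp
    have gle: "(g j)^2 \<le> (f j)^2" for j
      using gk gkpos by (cases "j = k") (auto simp: g_def intro: power_mono)
    have "feasible_P2 N \<gamma> \<upsilon> Pb h T g y"
      unfolding feasible_P2_def
    proof (intro conjI ballI)
      fix m assume m: "m \<in> {1..N}"
      have "(\<Sum>j=1..m. \<gamma> * (g j)^2) \<le> (\<Sum>j=1..m. \<gamma> * (f j)^2)"
        by (rule sum_mono) (use gle assms(2) in \<open>simp add: mult_left_mono\<close>)
      then show "(\<Sum>j=1..m. \<gamma> * (g j)^2) \<le> \<upsilon> * Pb * h * (\<Sum>j=1..m. y j)" using E m by (meson order_trans)
    next
      show "(\<Sum>k=1..N. y k) \<le> T" by (rule S)
    next
      fix j assume j: "j \<in> {1..N}"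
      show "g j > 0"
        using F j ypos by (cases "j = k") (auto simp: g_def)
    next
      fix j assume j: "j \<in> {1..N}"
      show "1 / g j - y j \<le> 0"
        using F j ypos by (cases "j = k") (auto simp: g_def)
    qed
    hence "obj N \<gamma> p f \<le> obj N \<gamma> p g" by (rule op)
    moreover have "obj N \<gamma> p g < obj N \<gamma> p f"
      unfolding obj_def
    proof (rule sum_strict_mono_ex1)
      show "finite {1..N}" by simp
      show "\<forall>j\<in>{1..N}. \<gamma> * p j * (g j)^2 \<le> \<gamma> * p j * (f j)^2"
        using gle pp assms(2) by (simp add: mult_left_mono)
      have "(g k)^2 < (f k)^2" using gk gkpos by (simp add: power_strict_mono)
      then have "\<gamma> * p k * (g k)^2 < \<gamma> * p k * (f k)^2"
        using pp[OF k0] assms(2) by simp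
      then show "\<exists>j\<in>{1..N}. \<gamma> * p j * (g j)^2 < \<gamma> * p j * (f j)^2" using k0 by blast
    qed
    ultimately show False by simp
  qed
  have s1: "(\<Sum>k=1..m. y k) = (\<Sum>k=1..m. 1 / f k)" if "m \<le> N" for m
    by (rule sum.cong) (use Y that in auto)
  have fP1: "feasible_P1 N \<gamma> \<upsilon> Pb h T f"
    unfolding feasible_P1_def using E S F s1 by auto
  have "obj N \<gamma> p f \<le> obj N \<gamma> p g" if "feasible_P1 N \<gamma> \<upsilon> Pb h T g" for g
  proof (rule op)
    show "feasible_P2 N \<gamma> \<upsilon> Pb h T g (\<lambda>k. 1 / g k)"
      using that unfolding feasible_P1_def feasible_P2_def by auto
  qed
  then show ?thesis using Y fP1 unfolding optimal_P1_def by auto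
qed

end
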